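(* Let $x=(x_1,\dots,x_n)$ and $y=(y_1,\dots,y_n)$ be indeterminates, and let $\phi:\mathbb{R}(y)\to\mathbb{R}(x)$ and $\psi:\mathbb{R}(x)\to\mathbb{R}(y)$ be mutually inverse $\mathbb{R}$-algebra isomorphisms of rational function fields (an invertible rational change of variables, $\phi(y_j)=\phi_j(x)$, $\psi(x_i)=\psi_i(y)$). For an integer matrix $A\in M_{r\times n}(\mathbb{Z})$ and $\lambda\in\mathbb{T}^r$, write $(\lambda\star f)(x)=f(\lambda^A*x)$ for $f\in\mathbb{R}(x)$. Say $A$ is dimensionally consistent with $\phi$ if for every $j$ there is $\beta_j\in\mathbb{Z}^r$ with $\lambda\star\phi(y_j)=\lambda^{\beta_j}\phi(y_j)$ for all $\lambda\in\mathbb{T}^r$; define analogously, for $B\in M_{r'\times n}(\mathbb{Z})$ acting on $\mathbb{R}(y)$ by $(\mu\bullet g)(y)=g(\mu^B*y)$, when $B$ is dimensionally consistent with $\psi$ (each $\psi(x_i)$ is scaled by a monomial character of $\mu$). Then: (1) The maximum of $\operatorname{rank}A$ over all integer matrices $A$ (with $n$ columns) dimensionally consistent with $\phi$ equals the maximum of $\operatorname{rank}B$ over all integer matrices $B$ dimensionally consistent with $\psi$. (2) Let $F_1,\dots,F_s\in\mathbb{R}(x)$ and $H_l=\psi(F_l)\in\mathbb{R}(y)$. Then the maximum of $\operatorname{rank}A$ over all $A$ dimensionally consistent with $\phi$ and fixing every $F_l$ (i.e. $\lambda\star F_l=F_l$ for all $\lambda,l$) equals the maximum of $\operatorname{rank}B$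 over all $B$ dimensionally consistent with $\psi$ and fixing every $H_l$. Consequently (Theorem on changes of variables): if two ODE systems are linked by an invertible rational change of variables, the maximal scaling symmetry of each system that also makes the change of variables dimensionally consistent has the same rank for both systems.
   Context: $\mathbb{T}^r$ is the group $(\mathbb{R}\setminus\{0\})^r$ under componentwise multiplication. For $a\in\mathbb{Z}^r$, $\lambda^a=\prod_k\lambda_k^{a_k}$; for a matrix $A$ with columns $A_1,\dots,A_n$, $\lambda^A=(\lambda^{A_1},\dots,\lambda^{A_n})$ and $\lambda^A*x=(\lambda^{A_1}x_1,\dots,\lambda^{A_n}x_n)$. The rank of a scaling matrix is the dimension of the scaling action. For an ODE system written as $\frac{dz}{dt}=\frac{z*F(t,z,c)}{t}$ with all quantities (time, dependent variables, parameters) listed as $x_1,\dots,x_n$, a scaling matrix is a scaling symmetry exactly when it fixes the rational functions $F_l$; the second system is obtained by rewriting the $F_l$ in the new quantities, i.e. as $H_l=\psi(F_l)$. *)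

theory Defs
  imports "HOL-Analysis.Analysis" "HOL-Library.Poly_Mapping" "HOL-Computational_Algebra.Fraction_Field"
begin

text \<open>Polynomials in the indeterminates indexed by the finite type 'n (n = CARD('n)),
  represented as finitely supported maps from monomials (exponent vectors) to coefficients.\<close>
type_synonym 'n mpoly = "('n \<Rightarrow>\<^sub>0 nat) \<Rightarrow>\<^sub>0 real"

type_synonym 'n ratfun = "'n mpoly fract"

definition rvar :: "'n::{finite,linorder} \<Rightarrow> 'n ratfun" where
  "rvar i = Fract (Poly_Mapping.single (Poly_Mapping.single i 1) 1) 1"

definition rconst :: "real \<Rightarrow> 'n::{finite,linorder} ratfun" where
  "rconst c = Fract (Poly_Mapping.single 0 c) 1"

definition ralg_hom :: "('n::{finite,linorder} ratfun \<Rightarrow> 'n ratfun) \<Rightarrow> bool" where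
  "ralg_hom h \<longleftrightarrow> (\<forall>f g. h (f + g) = h f + h g) \<and> (\<forall>f g. h (f * g) = h f * h g)
     \<and> h 1 = 1 \<and> (\<forall>c. h (rconst c) = rconst c)"

text \<open>lambda in T^r (only the first r coordinates matter).\<close>
definition torus :: "nat \<Rightarrow> (nat \<Rightarrow> real) set" where
  "torus r = {lam. \<forall>k<r. lam k \<noteq> 0}"

definition mchar :: "nat \<Rightarrow> (nat \<Rightarrow> real) \<Rightarrow> (nat \<Rightarrow> int) \<Rightarrow> real" where
  "mchar r lam a = (\<Prod>k<r. lam k powi a k)"

text \<open>An r x n integer matrix A is given by r and its entries A k i (k < r); column i is (\<lambda>k. A k i).\<close>
definition scale_poly :: "nat \<Rightarrow> (nat \<Rightarrow> 'n::{finite,linorder} \<Rightarrow> int) \<Rightarrow> (nat \<Rightarrow> real) \<Rightarrow> 'n mpoly \<Rightarrow> 'n mpoly" where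
  "scale_poly r A lam p =
     Poly_Mapping.mapp (\<lambda>m c. c * (\<Prod>i\<in>UNIV. (mchar r lam (\<lambda>k. A k i)) ^ (Poly_Mapping.lookup m i))) p"

text \<open>(lambda \<star> f)(x) = f(lambda^A * x) for a rational function f.\<close>
definition scale :: "nat \<Rightarrow> (nat \<Rightarrow> 'n::{finite,linorder} \<Rightarrow> int) \<Rightarrow> (nat \<Rightarrow> real) \<Rightarrow> 'n ratfun \<Rightarrow> 'n ratfun" where
  "scale r A lam f = (THE g. \<exists>a b. b \<noteq> 0 \<and> f = Fract a b \<and> g = Fract (scale_poly r A lam a) (scale_poly r A lam b))"

definition dim_consistent :: "nat \<Rightarrow> (nat \<Rightarrow> 'n::{finite,linorder} \<Rightarrow> int) \<Rightarrow> ('n ratfun \<Rightarrow> 'n ratfun) \<Rightarrow> bool" where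
  "dim_consistent r A h \<longleftrightarrow>
     (\<forall>j. \<exists>beta::nat \<Rightarrow> int. \<forall>lam\<in>torus r.
        scale r A lam (h (rvar j)) = rconst (mchar r lam beta) * h (rvar j))"

definition fixes_all :: "nat \<Rightarrow> (nat \<Rightarrow> 'n::{finite,linorder} \<Rightarrow> int) \<Rightarrow> nat \<Rightarrow> (nat \<Rightarrow> 'n ratfun) \<Rightarrow> bool" where
  "fixes_all r A s F \<longleftrightarrow> (\<forall>lam\<in>torus r. \<forall>l<s. scale r A lam (F l) = F l)"

definition mrank :: "nat \<Rightarrow> (nat \<Rightarrow> 'n::finite \<Rightarrow> int) \<Rightarrow> nat" where
  "mrank r A = dim {(\<chi> i. real_of_int (A k i)) :: real^'n | k. k < r}"

end

theory Submission
  imports Defs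
begin

lemma pm_expansion:
  fixes p :: "'a \<Rightarrow>\<^sub>0 'b::comm_monoid_add"
  shows "p = (\<Sum>m\<in>Poly_Mapping.keys p. Poly_Mapping.single m (Poly_Mapping.lookup p m))"
proof -
  have *: "finite I \<Longrightarrow> Poly_Mapping.lookup (\<Sum>m\<in>I. Poly_Mapping.single m (Poly_Mapping.lookup p m)) j =
            (if j \<in> I then Poly_Mapping.lookup p j else 0)" for I j
    by (induction I rule: finite_induct) (auto simp: lookup_single lookup_add when_def)
  show ?thesis
    by (rule poly_mapping_eqI) (simp add: * in_keys_iff)
qed

lemma pm_induct:
  fixes p :: "'a \<Rightarrow>\<^sub>0 'b::comm_monoid_add"
  assumes "P 0" "\<And>m c. P (Poly_Mapping.single m c)" "\<And>p q. P p \<Longrightarrow> P q \<Longrightarrow> P (p + q)"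
  shows "P p"
proof -
  have "finite I \<Longrightarrow> P (\<Sum>m\<in>I. Poly_Mapping.single m (Poly_Mapping.lookup p m))" for I
    by (induction I rule: finite_induct) (auto intro: assms)
  then show ?thesis by (subst pm_expansion) simp
qed

definition wmap :: "('n \<Rightarrow> real) \<Rightarrow> 'n mpoly \<Rightarrow> 'n mpoly" where
  "wmap chi p = Poly_Mapping.mapp (\<lambda>m c. c * (\<Prod>i\<in>UNIV. (chi i) ^ (Poly_Mapping.lookup m i))) p"

definition wt :: "('n \<Rightarrow> real) \<Rightarrow> ('n \<Rightarrow>\<^sub>0 nat) \<Rightarrow> real" where
  "wt chi m = (\<Prod>i\<in>UNIV. (chi i) ^ (Poly_Mapping.lookup m i))"

lemma lookup_wmap: "Poly_Mapping.lookup (wmap chi p) m = Poly_Mapping.lookup p m * wt chi m"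
  by (auto simp: wmap_def wt_def lookup_mapp in_keys_iff when_def)

lemma wmap_add: "wmap chi (p + q) = wmap chi p + wmap chi q"
  by (rule poly_mapping_eqI) (simp add: lookup_wmap lookup_add distrib_right)

lemma wmap_single: "wmap chi (Poly_Mapping.single m c) = Poly_Mapping.single m (c * wt chi m)"
  by (rule poly_mapping_eqI) (simp add: lookup_wmap lookup_single when_def)

lemma wmap_zero: "wmap chi 0 = 0"
  by (rule poly_mapping_eqI) (simp add: lookup_wmap)

lemma wt_add: "wt (chi::'n::finite \<Rightarrow> real) (m + m') = wt chi m * wt chi m'"
  by (simp add: wt_def lookup_add power_add prod.distrib)

lemma wt_zero: "wt chi 0 = 1"
  by (simp add: wt_def)

lemma wmap_mult: "wmap (chi::'n::finite \<Rightarrow> real) (p * q) = wmap chi p * wmap chi q"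
proof (induction p rule: pm_induct)
  case 1 then show ?case by (simp add: wmap_zero)
next
  case (2 m c)
  show ?case
  proof (induction q rule: pm_induct)
    case 1 then show ?case by (simp add: wmap_zero)
  next
    case (2 m' c')
    then show ?case by (simp add: mult_single wmap_single wt_add mult_ac)
  next
    case (3 p q)
    then show ?case by (simp add: distrib_left wmap_add)
  qed
next
  case (3 p1 p2)
  then show ?case by (simp add: distrib_right wmap_add)
qed

lemma wmap_one: "wmap (chi::'n::finite \<Rightarrow> real) 1 = 1"
  by (metis single_one wmap_single wt_zero mult_1)

lemma wt_nz: "(\<forall>i. (chi::'n::finite\<Rightarrow>real) i \<noteq> 0) \<Longrightarrow> wt chi m \<noteq> 0"
  by (simp add: wt_def)

lemma wmap_eq0: "(\<forall>i. (chi::'n::finite\<Rightarrow>real) i \<noteq> 0) \<Longrightarrow> wmap chi p = 0 \<longleftrightarrow> p = 0"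
  by (auto simp: poly_mapping_eq_iff fun_eq_iff lookup_wmap wt_nz)

lemma wmap_ones: "(\<forall>i. chi i = 1) \<Longrightarrow> wmap chi p = p"
  by (rule poly_mapping_eqI) (simp add: lookup_wmap wt_def)


lemma rank_le_aux:
  fixes a b :: "nat \<Rightarrow> real^'n"
  assumes H: "\<And>t. (\<Sum>k<r. t k *\<^sub>R b k) = 0 \<Longrightarrow> (\<Sum>k<r. t k *\<^sub>R a k) = 0"
  shows "dim {a k|k. k<r} \<le> dim {b k|k. k<r}"
proof -
  let ?S = "{a k|k. k<r}"
  obtain Bs where Bs: "Bs \<subseteq> ?S" "independent Bs" "card Bs = dim ?S"
    by (rule basis_exists)
  have fBs: "finite Bs" using Bs(2) independent_bound_general by metis
  have "\<forall>v\<in>Bs. \<exists>k. k < r \<and> a k = v" using Bs(1) by blast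
  then obtain idx where idx: "\<And>v. v \<in> Bs \<Longrightarrow> idx v < r \<and> a (idx v) = v" by metis
  define K where "K = idx ` Bs"
  have injidx: "inj_on idx Bs" by (metis idx inj_onI)
  have cardK: "card K = card Bs" unfolding K_def using card_image[OF injidx] .
  have Kr: "K \<subseteq> {..<r}" using idx K_def by auto
  have fK: "finite K" using fBs K_def by simp
  have aK: "a ` K = Bs" unfolding K_def using idx by (force simp: image_image)
  have key: "\<forall>k\<in>K. u k = 0" if u: "(\<Sum>k\<in>K. u k *\<^sub>R b k) = 0" for u
  proof -
    define t where "t k = (if k \<in> K then u k else 0)" for k
    have "(\<Sum>k<r. t k *\<^sub>R b k) = (\<Sum>k\<in>K. u k *\<^sub>R b k)"
    proof -
      have "(\<Sum>k<r. t k *\<^sub>R b k) = (\<Sum>k\<in>K. t k *\<^sub>R b k)"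
        by (rule sum.mono_neutral_right) (use Kr in \<open>auto simp: t_def\<close>)
      also have "\<dots> = (\<Sum>k\<in>K. u k *\<^sub>R b k)" by (rule sum.cong) (auto simp: t_def)
      finally show ?thesis .
    qed
    then have "(\<Sum>k<r. t k *\<^sub>R a k) = 0" using H u by simp
    moreover have "(\<Sum>k<r. t k *\<^sub>R a k) = (\<Sum>k\<in>K. u k *\<^sub>R a k)"
    proof -
      have "(\<Sum>k<r. t k *\<^sub>R a k) = (\<Sum>k\<in>K. t k *\<^sub>R a k)"
        by (rule sum.mono_neutral_right) (use Kr in \<open>auto simp: t_def\<close>)
      also have "\<dots> = (\<Sum>k\<in>K. u k *\<^sub>R a k)" by (rule sum.cong) (auto simp: t_def)
      finally show ?thesis .
    qed
    ultimately have "(\<Sum>k\<in>K. u k *\<^sub>R a k) = 0" by simp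
    moreover have "(\<Sum>k\<in>K. u k *\<^sub>R a k) = (\<Sum>v\<in>Bs. u (idx v) *\<^sub>R v)"
      unfolding K_def by (simp add: sum.reindex[OF injidx] idx)
    ultimately have z: "(\<Sum>v\<in>Bs. u (idx v) *\<^sub>R v) = 0" by simp
    have "\<forall>c. (\<Sum>v\<in>Bs. c v *\<^sub>R v) = 0 \<longrightarrow> (\<forall>v\<in>Bs. c v = 0)"
      using Bs(2) independent_explicit by blast
    then have "\<forall>v\<in>Bs. u (idx v) = 0" using z by (rule mp[OF spec[where x="\<lambda>v. u (idx v)"]])
    then show ?thesis unfolding K_def by auto
  qed
  have injbK: "inj_on b K"
  proof (rule inj_onI, rule ccontr)
    fix k k' assume kk: "k \<in> K" "k' \<in> K" "b k = b k'" "k \<noteq> k'"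
    define u where "u j = (if j = k then 1 else if j = k' then -1 else (0::real))" for j
    have "(\<Sum>j\<in>K. u j *\<^sub>R b j) = (\<Sum>j\<in>{k,k'}. u j *\<^sub>R b j)"
      by (rule sum.mono_neutral_right) (use fK kk in \<open>auto simp: u_def\<close>)
    also have "\<dots> = 0" using kk by (simp add: u_def)
    finally have "\<forall>j\<in>K. u j = 0" using key by blast
    then show False using kk unfolding u_def by (metis one_neq_zero)
  qed
  have indT: "independent (b ` K)"
    unfolding independent_explicit
  proof (intro conjI allI impI)
    show "finite (b ` K)" using fK by simp
    fix c assume "(\<Sum>v\<in>b ` K. c v *\<^sub>R v) = 0"
    then have "(\<Sum>k\<in>K. c (b k) *\<^sub>R b k) = 0" by (simp add: sum.reindex[OF injbK])
    then show "\<forall>v\<in>b ` K. c v = 0" using key[of "\<lambda>k. c (b k)"] by auto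
  qed
  have "card (b ` K) \<le> dim {b k|k. k<r}"
    by (rule independent_card_le_dim) (use Kr indT in auto)
  then show ?thesis using Bs(3) cardK card_image[OF injbK] by simp
qed


lemma scale_poly_wmap: "scale_poly r A lam = wmap (\<lambda>i. mchar r lam (\<lambda>k. A k i))"
  by (simp add: fun_eq_iff scale_poly_def wmap_def)

definition good :: "nat \<Rightarrow> (nat \<Rightarrow> 'n::{finite,linorder} \<Rightarrow> int) \<Rightarrow> (nat \<Rightarrow> real) \<Rightarrow> bool" where
  "good r A lam \<longleftrightarrow> (\<forall>i. mchar r lam (\<lambda>k. A k i) \<noteq> 0)"

lemma torus_good: "lam \<in> torus r \<Longrightarrow> good r A lam"
  by (simp add: good_def mchar_def torus_def)

lemma scale_Fract:
  assumes g: "good r A lam" and b: "b \<noteq> 0"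
  shows "scale r A lam (Fract a b) = Fract (scale_poly r A lam a) (scale_poly r A lam b)"
proof -
  let ?sp = "scale_poly r A lam"
  have nz: "\<And>p. ?sp p = 0 \<longleftrightarrow> p = 0" using g by (simp add: scale_poly_wmap wmap_eq0 good_def)
  have mu: "\<And>p q. ?sp (p * q) = ?sp p * ?sp q" by (simp add: scale_poly_wmap wmap_mult)
  show ?thesis unfolding scale_def
  proof (rule the_equality)
    show "\<exists>a' b'. b' \<noteq> 0 \<and> Fract a b = Fract a' b' \<and> Fract (?sp a) (?sp b) = Fract (?sp a') (?sp b')"
      using b by blast
  next
    fix g assume "\<exists>a' b'. b' \<noteq> 0 \<and> Fract a b = Fract a' b' \<and> g = Fract (?sp a') (?sp b')"
    then obtain a' b' where h: "b' \<noteq> 0" "Fract a b = Fract a' b'" "g = Fract (?sp a') (?sp b')" by blast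
    have "a * b' = a' * b" using h(1,2) b eq_fract by blast
    then have "?sp a * ?sp b' = ?sp a' * ?sp b" by (metis mu)
    then show "g = Fract (?sp a) (?sp b)" using h nz b by (simp add: eq_fract)
  qed
qed

definition rhom :: "('n::{finite,linorder} ratfun \<Rightarrow> 'n ratfun) \<Rightarrow> bool" where
  "rhom h \<longleftrightarrow> (\<forall>f g. h (f + g) = h f + h g) \<and> (\<forall>f g. h (f * g) = h f * h g) \<and> h 1 = 1"

lemma ralg_rhom: "ralg_hom h \<Longrightarrow> rhom h" by (simp add: ralg_hom_def rhom_def)

lemma scale_rhom:
  assumes g: "good r A lam"
  shows "rhom (scale r A lam)"
proof -
  let ?sp = "scale_poly r A lam"
  have nz: "\<And>p. ?sp p = 0 \<longleftrightarrow> p = 0" using g by (simp add: scale_poly_wmap wmap_eq0 good_def)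
  have mu: "\<And>p q. ?sp (p * q) = ?sp p * ?sp q" by (simp add: scale_poly_wmap wmap_mult)
  have ad: "\<And>p q. ?sp (p + q) = ?sp p + ?sp q" by (simp add: scale_poly_wmap wmap_add)
  have on: "?sp 1 = 1" by (simp add: scale_poly_wmap wmap_one)
  have "scale r A lam (f + h) = scale r A lam f + scale r A lam h" for f h
  proof (cases f, cases h)
    fix a b c d assume "f = Fract a b" "b \<noteq> 0" "h = Fract c d" "d \<noteq> 0"
    then show ?thesis by (simp add: scale_Fract[OF g] mu ad nz)
  qed
  moreover have "scale r A lam (f * h) = scale r A lam f * scale r A lam h" for f h
  proof (cases f, cases h)
    fix a b c d assume "f = Fract a b" "b \<noteq> 0" "h = Fract c d" "d \<noteq> 0"
    then show ?thesis by (simp add: scale_Fract[OF g] mu nz)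
  qed
  moreover have "scale r A lam 1 = 1"
    by (simp add: One_fract_def scale_Fract[OF g] on)
  ultimately show ?thesis by (simp add: rhom_def)
qed

lemma scale_rconst: "good r A lam \<Longrightarrow> scale r A lam (rconst c) = rconst c"
  by (simp add: rconst_def scale_Fract scale_poly_wmap wmap_single wt_zero wmap_one)

lemma scale_rvar: "good r A lam \<Longrightarrow> scale r A lam (rvar i) = rconst (mchar r lam (\<lambda>k. A k i)) * rvar i"
proof -
  assume g: "good r A lam"
  have "wt (\<lambda>i. mchar r lam (\<lambda>k. A k i)) (Poly_Mapping.single i 1) = mchar r lam (\<lambda>k. A k i)"
    unfolding wt_def lookup_single when_def
    by (simp add: if_distrib[of "\<lambda>e. _ ^ e"] prod.delta cong: if_cong)
  then show ?thesis using g
    by (simp add: rvar_def rconst_def scale_Fract scale_poly_wmap wmap_single mult_single wmap_one)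
qed

lemma scale_id: "(\<forall>i. mchar r lam (\<lambda>k. A k i) = 1) \<Longrightarrow> scale r A lam f = f"
proof -
  assume h: "\<forall>i. mchar r lam (\<lambda>k. A k i) = 1"
  then have g: "good r A lam" by (simp add: good_def)
  show ?thesis
  proof (cases f)
    fix a b assume "f = Fract a b" "b \<noteq> 0"
    then show ?thesis using h by (simp add: scale_Fract[OF g] scale_poly_wmap wmap_ones)
  qed
qed


lemma rhom_zero: "rhom h \<Longrightarrow> h 0 = 0"
  unfolding rhom_def by (metis add_cancel_right_right add_0)

lemma rhom_pow: "rhom h \<Longrightarrow> h (x ^ n) = h x ^ n"
  by (induction n) (simp_all add: rhom_def)

lemma rhom_prod: "rhom h \<Longrightarrow> h (\<Prod>i\<in>I. f i) = (\<Prod>i\<in>I. h (f i))"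
  by (induction I rule: infinite_finite_induct) (simp_all add: rhom_def)

lemma rhom_inverse: "rhom h \<Longrightarrow> h (inverse x) = inverse (h x)"
proof (cases "x = 0")
  case True
  assume "rhom h" then show ?thesis using True by (simp add: rhom_zero)
next
  case False
  assume r: "rhom h"
  have "h x * h (inverse x) = 1" using r False by (metis rhom_def right_inverse)
  then show ?thesis by (metis inverse_unique)
qed

definition emb :: "'n::{finite,linorder} mpoly \<Rightarrow> 'n ratfun" where "emb p = Fract p 1"

lemma emb_mult: "emb (p * q) = emb p * emb q" by (simp add: emb_def)
lemma emb_add: "emb (p + q) = emb p + emb q" by (simp add: emb_def)
lemma emb_pow: "emb (p ^ n) = emb p ^ n"
  by (induction n) (simp_all add: emb_mult, simp add: emb_def One_fract_def)
lemma emb_prod: "emb (\<Prod>i\<in>I. f i) = (\<Prod>i\<in>I. emb (f i))"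
  by (induction I rule: infinite_finite_induct) (simp_all add: emb_mult, simp_all add: emb_def One_fract_def)

lemma single_pow1: "Poly_Mapping.single (Poly_Mapping.single i (1::nat)) (1::real) ^ n = Poly_Mapping.single (Poly_Mapping.single i n) 1"
proof (induction n)
  case 0 then show ?case by simp
next
  case (Suc n) then show ?case by (simp add: mult_single flip: single_add)
qed

lemma single_prod1: "(\<Prod>i\<in>I. Poly_Mapping.single (f i) (1::real)) = Poly_Mapping.single (\<Sum>i\<in>I. f i) 1"
  by (induction I rule: infinite_finite_induct) (simp_all add: mult_single)

lemma monom_expand:
  fixes m :: "'n::finite \<Rightarrow>\<^sub>0 nat"
  shows "(\<Sum>i\<in>UNIV. Poly_Mapping.single i (Poly_Mapping.lookup m i)) = m"
proof -
  have "(\<Sum>i\<in>UNIV. Poly_Mapping.single i (Poly_Mapping.lookup m i)) = (\<Sum>i\<in>Poly_Mapping.keys m. Poly_Mapping.single i (Poly_Mapping.lookup m i))"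
    by (rule sum.mono_neutral_right) (auto simp: in_keys_iff)
  also have "\<dots> = m" by (rule pm_expansion[symmetric])
  finally show ?thesis .
qed

lemma emb_single:
  "emb (Poly_Mapping.single m c) = rconst c * (\<Prod>i\<in>UNIV. rvar i ^ Poly_Mapping.lookup m i)"
proof -
  have "Poly_Mapping.single m c = Poly_Mapping.single 0 c *
          (\<Prod>i\<in>UNIV. Poly_Mapping.single (Poly_Mapping.single i 1) 1 ^ Poly_Mapping.lookup m i)"
  proof -
    have "(\<Prod>i\<in>UNIV. Poly_Mapping.single (Poly_Mapping.single i 1) (1::real) ^ Poly_Mapping.lookup m i)
        = (\<Prod>i\<in>UNIV. Poly_Mapping.single (Poly_Mapping.single i (Poly_Mapping.lookup m i)) 1)"
      by (rule prod.cong[OF refl], rule single_pow1)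
    also have "\<dots> = Poly_Mapping.single m 1" by (simp only: single_prod1 monom_expand)
    finally show ?thesis by (simp add: mult_single)
  qed
  then show ?thesis
    by (simp add: emb_mult emb_prod emb_pow rconst_def rvar_def flip: emb_def)
qed

lemma rhom_unique:
  assumes h1: "rhom h1" and h2: "rhom h2"
    and c: "\<And>c. h1 (rconst c) = h2 (rconst c)" and v: "\<And>i. h1 (rvar i) = h2 (rvar i)"
  shows "h1 f = h2 f"
proof -
  have pol: "h1 (emb p) = h2 (emb p)" for p
  proof (induction p rule: pm_induct)
    case 1 then show ?case using h1 h2 by (simp add: emb_def rhom_zero flip: Zero_fract_def)
  next
    case (2 m c)
    show ?case using h1 h2 by (simp add: emb_single rhom_def rhom_prod rhom_pow c v)
  next
    case (3 p q)
    then show ?case using h1 h2 by (simp add: emb_add rhom_def)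
  qed
  show ?thesis
  proof (cases f)
    fix a b assume f: "f = Fract a b" "b \<noteq> 0"
    have "f = emb a * inverse (emb b)" using f by (simp add: emb_def)
    then show ?thesis using h1 h2 pol by (simp add: rhom_def rhom_inverse)
  qed
qed


lemma rhom_comp: "rhom f \<Longrightarrow> rhom g \<Longrightarrow> rhom (f \<circ> g)"
  by (simp add: rhom_def)

lemma mchar_exp: "mchar r (\<lambda>k. exp (t k)) v = exp (\<Sum>k<r. t k * of_int (v k))"
  by (simp add: mchar_def exp_power_int exp_sum mult.commute)

lemma exp_torus: "(\<lambda>k. exp (t k)) \<in> torus r"
  by (simp add: torus_def)

lemma rconst_inj: "rconst c = rconst d \<Longrightarrow> c = d"
  by (simp add: rconst_def eq_fract) (metis lookup_single_eq)

lemma rconst_one: "rconst 1 = 1"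
  by (simp add: rconst_def One_fract_def)

lemma rvar_nz: "rvar i \<noteq> 0"
  by (simp add: rvar_def Zero_fract_def eq_fract) (metis lookup_single_eq lookup_zero one_neq_zero)

lemma transfer:
  fixes phi psi :: "'n::{finite,linorder} ratfun \<Rightarrow> 'n ratfun"
  assumes hp: "ralg_hom phi" and hq: "ralg_hom psi"
    and i1: "\<And>f. phi (psi f) = f" and i2: "\<And>g. psi (phi g) = g"
    and dc: "dim_consistent r A phi" and fx: "fixes_all r A s F"
  shows "\<exists>B. dim_consistent r B psi \<and> fixes_all r B s (\<lambda>l. psi (F l)) \<and> mrank r A \<le> mrank r B"
proof -
  from dc obtain beta where beta: "\<And>j lam. lam \<in> torus r \<Longrightarrow>
      scale r A lam (phi (rvar j)) = rconst (mchar r lam (beta j)) * phi (rvar j)"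
    unfolding dim_consistent_def by metis
  define B where "B = (\<lambda>k j. beta j k)"
  have rp: "rhom phi" and rq: "rhom psi" using hp hq by (simp_all add: ralg_rhom)
  have comm: "scale r A lam (phi g) = phi (scale r B lam g)" if lam: "lam \<in> torus r" for lam g
  proof -
    have gA: "good r A lam" and gB: "good r B lam" using lam by (simp_all add: torus_good)
    have "(scale r A lam \<circ> phi) g = (phi \<circ> scale r B lam) g"
    proof (rule rhom_unique[OF rhom_comp[OF scale_rhom[OF gA] rp] rhom_comp[OF rp scale_rhom[OF gB]]])
      show "(scale r A lam \<circ> phi) (rconst c) = (phi \<circ> scale r B lam) (rconst c)" for c
        using hp gA gB by (simp add: ralg_hom_def scale_rconst)
      show "(scale r A lam \<circ> phi) (rvar i) = (phi \<circ> scale r B lam) (rvar i)" for i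
        using hp gA gB lam by (simp add: ralg_hom_def scale_rvar beta B_def)
    qed
    then show ?thesis by simp
  qed
  have comm2: "scale r B lam (psi f) = psi (scale r A lam f)" if lam: "lam \<in> torus r" for lam f
    using comm[OF lam, of "psi f"] by (metis i1 i2)
  have dcB: "dim_consistent r B psi"
    unfolding dim_consistent_def
  proof
    fix j
    show "\<exists>beta. \<forall>lam\<in>torus r. scale r B lam (psi (rvar j)) = rconst (mchar r lam beta) * psi (rvar j)"
    proof (intro exI ballI)
      fix lam assume lam: "lam \<in> torus r"
      show "scale r B lam (psi (rvar j)) = rconst (mchar r lam (\<lambda>k. A k j)) * psi (rvar j)"
        using comm2[OF lam] hq lam by (simp add: ralg_hom_def scale_rvar torus_good)
    qed
  qed
  have fxB: "fixes_all r B s (\<lambda>l. psi (F l))"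
    using fx comm2 by (simp add: fixes_all_def)
  have psinz: "psi (rvar i) \<noteq> 0" for i
    by (metis i1 rvar_nz rhom_zero rp)
  have rk: "mrank r A \<le> mrank r B"
    unfolding mrank_def
  proof (rule rank_le_aux)
    fix t :: "nat \<Rightarrow> real"
    assume "(\<Sum>k<r. t k *\<^sub>R (\<chi> i. real_of_int (B k i))) = (0::real^'n::{finite,linorder})"
    then have z: "(\<Sum>k<r. t k * real_of_int (B k j)) = 0" for j
      by (auto simp: vec_eq_iff)
    define lam where "lam = (\<lambda>k. exp (t k))"
    have lam: "lam \<in> torus r" by (simp add: lam_def exp_torus)
    have "mchar r lam (\<lambda>k. B k j) = 1" for j by (simp add: lam_def mchar_exp z)
    then have id: "scale r B lam f = f" for f by (simp add: scale_id)
    have "(\<Sum>k<r. t k * real_of_int (A k i)) = 0" for i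
    proof -
      have "psi (scale r A lam (rvar i)) = psi (rvar i)" using comm2[OF lam] id by metis
      then have "rconst (mchar r lam (\<lambda>k. A k i)) * psi (rvar i) = 1 * psi (rvar i)"
        using hq lam by (simp add: ralg_hom_def scale_rvar torus_good)
      then have "rconst (mchar r lam (\<lambda>k. A k i)) = (rconst 1 :: 'n ratfun)"
        using psinz[of i] by (simp add: rconst_one)
      then have "mchar r lam (\<lambda>k. A k i) = 1" by (rule rconst_inj)
      then show ?thesis by (simp add: lam_def mchar_exp)
    qed
    then show "(\<Sum>k<r. t k *\<^sub>R (\<chi> i. real_of_int (A k i))) = (0::real^'n::{finite,linorder})"
      by (simp add: vec_eq_iff)
  qed
  show ?thesis using dcB fxB rk by blast
qed


lemma Max_eq_dom:
  fixes S T :: "nat set"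
  assumes "finite S" "finite T" "S \<noteq> {}"
    and "\<And>x. x \<in> S \<Longrightarrow> \<exists>y\<in>T. x \<le> y" and "\<And>y. y \<in> T \<Longrightarrow> \<exists>x\<in>S. y \<le> x"
  shows "Max S = Max T"
proof -
  have "T \<noteq> {}" using assms(3,4) by blast
  have "Max S \<le> Max T" using assms Max_in[OF assms(1,3)] by (meson Max_ge order_trans)
  moreover have "Max T \<le> Max S" using assms Max_in[OF assms(2) \<open>T \<noteq> {}\<close>] by (meson Max_ge order_trans)
  ultimately show ?thesis by simp
qed

lemma mrank_le: "mrank r (A :: nat \<Rightarrow> 'n::{finite,linorder} \<Rightarrow> int) \<le> CARD('n)"
  unfolding mrank_def by (rule dim_subset_UNIV_cart)

lemma fin_ranks: "finite {mrank r A | r (A :: nat \<Rightarrow> 'n::{finite,linorder} \<Rightarrow> int). P r A}"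
  by (rule finite_subset[of _ "{..CARD('n)}"]) (auto simp: mrank_le)

lemma zero_ok: "dim_consistent 0 A h \<and> fixes_all 0 A s F"
proof -
  have "scale 0 A lam f = f" for lam f by (simp add: scale_id mchar_def)
  then show ?thesis by (simp add: dim_consistent_def fixes_all_def mchar_def rconst_one)
qed

lemma part2:
  fixes phi psi :: "'n::{finite,linorder} ratfun \<Rightarrow> 'n ratfun"
  assumes hp: "ralg_hom phi" and hq: "ralg_hom psi"
    and i1: "\<And>f. phi (psi f) = f" and i2: "\<And>g. psi (phi g) = g"
  shows "Max {mrank r A | r A. dim_consistent r A phi \<and> fixes_all r A s F}
           = Max {mrank r B | r B. dim_consistent r B psi \<and> fixes_all r B s (\<lambda>l. psi (F l))}"
proof (rule Max_eq_dom[OF fin_ranks fin_ranks])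
  show "{mrank r A | r A. dim_consistent r A phi \<and> fixes_all r A s F} \<noteq> {}"
    using zero_ok by blast
next
  fix x assume "x \<in> {mrank r A | r A. dim_consistent r A phi \<and> fixes_all r A s F}"
  then obtain r A where "x = mrank r A" "dim_consistent r A phi" "fixes_all r A s F" by blast
  then show "\<exists>y\<in>{mrank r B | r B. dim_consistent r B psi \<and> fixes_all r B s (\<lambda>l. psi (F l))}. x \<le> y"
    using transfer[OF hp hq i1 i2] by blast
next
  fix y assume "y \<in> {mrank r B | r B. dim_consistent r B psi \<and> fixes_all r B s (\<lambda>l. psi (F l))}"
  then obtain r B where "y = mrank r B" "dim_consistent r B psi" "fixes_all r B s (\<lambda>l. psi (F l))" by blast
  then obtain A where "dim_consistent r A phi" "fixes_all r A s (\<lambda>l. phi (psi (F l)))" "y \<le> mrank r A"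
    using transfer[OF hq hp i2 i1] by blast
  then show "\<exists>x\<in>{mrank r A | r A. dim_consistent r A phi \<and> fixes_all r A s F}. y \<le> x"
    using i1 by auto
qed

theorem mainTheorem6:
  fixes phi psi :: "'n::{finite,linorder} ratfun \<Rightarrow> 'n ratfun"
    and s :: nat and F :: "nat \<Rightarrow> 'n ratfun"
  assumes "ralg_hom phi" and "ralg_hom psi"
    and "\<And>f. phi (psi f) = f" and "\<And>g. psi (phi g) = g"
  shows "(Max {mrank r A | r A. dim_consistent r A phi}
           = Max {mrank r B | r B. dim_consistent r B psi})
       \<and> (Max {mrank r A | r A. dim_consistent r A phi \<and> fixes_all r A s F}
           = Max {mrank r B | r B. dim_consistent r B psi \<and> fixes_all r B s (\<lambda>l. psi (F l))})"
proof
  have f0: "\<And>r A G. fixes_all r A 0 G" by (simp add: fixes_all_def)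
  show "Max {mrank r A | r A. dim_consistent r A phi} = Max {mrank r B | r B. dim_consistent r B psi}"
    using part2[OF assms, of 0 F] by (simp add: f0)
  show "Max {mrank r A | r A. dim_consistent r A phi \<and> fixes_all r A s F}
           = Max {mrank r B | r B. dim_consistent r B psi \<and> fixes_all r B s (\<lambda>l. psi (F l))}"
    by (rule part2[OF assms])
qed

end
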